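(* Let $\mathcal{A}=(A,\le,\wedge,1,\to)$ be a strong algebra whose monoidal structure is its meet structure and which internalizes its monoidal structure, i.e. $a\to(b\wedge c)=(a\to b)\wedge(a\to c)$ for all $a,b,c$. Then there exist a Kripke frame $\mathcal{K}=(W,\le_W,R)$ and a map $i:A\to U(W,\le_W)$ which preserves finite meets, is an order embedding, and satisfies $i(a\to b)=i(a)\to_{\mathcal{K}}i(b)$. Moreover, if $(A,\le)$ has all finite joins, is distributive, and $\to$ internalizes joins ($(a\vee b)\to c=(a\to c)\wedge(b\to c)$), then $i$ can be chosen to preserve finite joins as well. Finally, if $\mathcal{A}$ is the reduct of a temporal algebra, i.e. there is $\nabla:A\to A$ with $a\wedge\nabla b\le c$ iff $b\le a\to c$, then $i$ also satisfies $i(\nabla a)=\nabla_{\mathcal{K}}i(a)$, and for any $\mathcal{R}\subseteq\{N,H,P,F,wF\}$, if $(A,\le,\wedge,1,\nabla,\to)$ satisfies $\mathcal{R}$ then so does $\mathcal{K}$.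
   Context: An implication on a meet-semilattice with top $(A,\le,\wedge,1)$ is a map $\to:A^{op}\times A\to A$, antitone in the first and monotone in the second argument, with $1\le a\to a$ and $(a\to b)\wedge(b\to c)\le a\to c$; a strong algebra is such a structure. Distributive means binary meet distributes over finite joins. A Kripke frame is $(W,\le_W,R)$ with $(W,\le_W)$ a poset and $R\subseteq W\times W$ such that $(u,v)\in R$, $u'\le_W u$, $v\le_W v'$ imply $(u',v')\in R$. $U(W,\le_W)$ is the set of upsets of $(W,\le_W)$ ordered by inclusion, with meet $\cap$ and top $W$. For an upset $X$, $\nabla_{\mathcal{K}}X=\{v\in W\mid\exists u\in X\,(u,v)\in R\}$, and $X\to_{\mathcal{K}}Y=\{w\in W\mid\forall v\,((w,v)\in R\wedge v\in X\Rightarrow v\in Y)\}$, so that $X\cap\nabla_{\mathcal{K}}Y\subseteq Z$ iff $Y\subseteq X\to_{\mathcal{K}}Z$. The algebra satisfies: $(N)$ if $\nabla1=1$ and $\nabla(a\wedge b)=\nabla a\wedge\nabla b$; $(H)$ if $\nabla$ preserves all the structure, including $\nabla(a\to b)=\nabla a\to\nabla b$; $(P)$ if $\nabla a\le a$; $(F)$ if $a\le\nabla a$; $(wF)$ if $A$ has a least element $0$ and $\nabla a=0$ implies $a=0$. The frame satisfies: $(N)$ if there is an order-preserving $\pi:W\to W$ with $(u,v)\in R$ iff $u\le_W\pi(v)$; $(H)$ if moreover such $\pi$ is an order isomorphism; $(P)$ if $R\subseteq\le_W$; $(F)$ if $R$ is reflexive; $(wF)$ if $R$ is serial ($\forall u\,\exists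 v\,(u,v)\in R$). *)

theory Defs
  imports Main
begin

definition strong_algebra :: "('a::bounded_semilattice_inf_top \<Rightarrow> 'a \<Rightarrow> 'a) \<Rightarrow> bool" where
  "strong_algebra imp \<longleftrightarrow>
     (\<forall>a a' b. a' \<le> a \<longrightarrow> imp a b \<le> imp a' b) \<and>
     (\<forall>a b b'. b \<le> b' \<longrightarrow> imp a b \<le> imp a b') \<and>
     (\<forall>a. top \<le> imp a a) \<and>
     (\<forall>a b c. inf (imp a b) (imp b c) \<le> imp a c)"

definition internalizes_meets :: "('a::bounded_semilattice_inf_top \<Rightarrow> 'a \<Rightarrow> 'a) \<Rightarrow> bool" where
  "internalizes_meets imp \<longleftrightarrow> (\<forall>a b c. imp a (inf b c) = inf (imp a b) (imp a c))"

definition is_join :: "'a::order \<Rightarrow> 'a \<Rightarrow> 'a \<Rightarrow> bool" where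
  "is_join a b j \<longleftrightarrow> a \<le> j \<and> b \<le> j \<and> (\<forall>d. a \<le> d \<and> b \<le> d \<longrightarrow> j \<le> d)"

definition is_least :: "'a::order \<Rightarrow> bool" where
  "is_least z \<longleftrightarrow> (\<forall>x. z \<le> x)"

definition has_finite_joins :: "'a::order itself \<Rightarrow> bool" where
  "has_finite_joins _ \<longleftrightarrow> (\<exists>z::'a. is_least z) \<and> (\<forall>a b::'a. \<exists>j. is_join a b j)"

text \<open>Binary meet distributes over finite joins (the nullary case is automatic).\<close>
definition distributive :: "'a::bounded_semilattice_inf_top itself \<Rightarrow> bool" where
  "distributive _ \<longleftrightarrow> (\<forall>a b c j::'a. is_join b c j \<longrightarrow> is_join (inf a b) (inf a c) (inf a j))"

definition internalizes_joins :: "('a::bounded_semilattice_inf_top \<Rightarrow> 'a \<Rightarrow> 'a) \<Rightarrow> bool" where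
  "internalizes_joins imp \<longleftrightarrow> (\<forall>a b c j. is_join a b j \<longrightarrow> imp j c = inf (imp a c) (imp b c))"

definition temporal :: "('a::bounded_semilattice_inf_top \<Rightarrow> 'a \<Rightarrow> 'a) \<Rightarrow> ('a \<Rightarrow> 'a) \<Rightarrow> bool" where
  "temporal imp nabla \<longleftrightarrow> (\<forall>a b c. inf a (nabla b) \<le> c \<longleftrightarrow> b \<le> imp a c)"

datatype cond = N | H | P | F | wF

fun alg_sat :: "cond \<Rightarrow> ('a::bounded_semilattice_inf_top \<Rightarrow> 'a \<Rightarrow> 'a) \<Rightarrow> ('a \<Rightarrow> 'a) \<Rightarrow> bool" where
  "alg_sat N imp nabla \<longleftrightarrow> nabla top = top \<and> (\<forall>a b. nabla (inf a b) = inf (nabla a) (nabla b))"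
| "alg_sat H imp nabla \<longleftrightarrow> nabla top = top \<and> (\<forall>a b. nabla (inf a b) = inf (nabla a) (nabla b))
      \<and> (\<forall>a b. nabla (imp a b) = imp (nabla a) (nabla b))"
| "alg_sat P imp nabla \<longleftrightarrow> (\<forall>a. nabla a \<le> a)"
| "alg_sat F imp nabla \<longleftrightarrow> (\<forall>a. a \<le> nabla a)"
| "alg_sat wF imp nabla \<longleftrightarrow> (\<exists>z. is_least z \<and> (\<forall>a. nabla a = z \<longrightarrow> a = z))"

definition kripke_frame :: "'w set \<Rightarrow> ('w \<Rightarrow> 'w \<Rightarrow> bool) \<Rightarrow> ('w \<times> 'w) set \<Rightarrow> bool" where
  "kripke_frame W leW R \<longleftrightarrow>
     (\<forall>u\<in>W. leW u u) \<and>
     (\<forall>u\<in>W. \<forall>v\<in>W. leW u v \<and> leW v u \<longrightarrow> u = v) \<and>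
     (\<forall>u\<in>W. \<forall>v\<in>W. \<forall>w\<in>W. leW u v \<and> leW v w \<longrightarrow> leW u w) \<and>
     R \<subseteq> W \<times> W \<and>
     (\<forall>u v u' v'. (u, v) \<in> R \<and> u' \<in> W \<and> v' \<in> W \<and> leW u' u \<and> leW v v' \<longrightarrow> (u', v') \<in> R)"

definition upset :: "'w set \<Rightarrow> ('w \<Rightarrow> 'w \<Rightarrow> bool) \<Rightarrow> 'w set \<Rightarrow> bool" where
  "upset W leW X \<longleftrightarrow> X \<subseteq> W \<and> (\<forall>x\<in>X. \<forall>y\<in>W. leW x y \<longrightarrow> y \<in> X)"

definition knabla :: "'w set \<Rightarrow> ('w \<times> 'w) set \<Rightarrow> 'w set \<Rightarrow> 'w set" where
  "knabla W R X = {v \<in> W. \<exists>u\<in>X. (u, v) \<in> R}"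

definition kimp :: "'w set \<Rightarrow> ('w \<times> 'w) set \<Rightarrow> 'w set \<Rightarrow> 'w set \<Rightarrow> 'w set" where
  "kimp W R X Y = {w \<in> W. \<forall>v. (w, v) \<in> R \<and> v \<in> X \<longrightarrow> v \<in> Y}"

fun frame_sat :: "cond \<Rightarrow> 'w set \<Rightarrow> ('w \<Rightarrow> 'w \<Rightarrow> bool) \<Rightarrow> ('w \<times> 'w) set \<Rightarrow> bool" where
  "frame_sat N W leW R \<longleftrightarrow> (\<exists>\<pi>. \<pi> ` W \<subseteq> W \<and> (\<forall>u\<in>W. \<forall>v\<in>W. leW u v \<longrightarrow> leW (\<pi> u) (\<pi> v))
      \<and> (\<forall>u\<in>W. \<forall>v\<in>W. (u, v) \<in> R \<longleftrightarrow> leW u (\<pi> v)))"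
| "frame_sat H W leW R \<longleftrightarrow> (\<exists>\<pi>. bij_betw \<pi> W W \<and> (\<forall>u\<in>W. \<forall>v\<in>W. leW u v \<longleftrightarrow> leW (\<pi> u) (\<pi> v))
      \<and> (\<forall>u\<in>W. \<forall>v\<in>W. (u, v) \<in> R \<longleftrightarrow> leW u (\<pi> v)))"
| "frame_sat P W leW R \<longleftrightarrow> (\<forall>(u, v)\<in>R. leW u v)"
| "frame_sat F W leW R \<longleftrightarrow> (\<forall>u\<in>W. (u, u) \<in> R)"
| "frame_sat wF W leW R \<longleftrightarrow> (\<forall>u\<in>W. \<exists>v. (u, v) \<in> R)"

definition embedding_props ::
  "('a::bounded_semilattice_inf_top \<Rightarrow> 'a \<Rightarrow> 'a) \<Rightarrow> 'w set \<Rightarrow> ('w \<Rightarrow> 'w \<Rightarrow> bool) \<Rightarrow> ('w \<times> 'w) set \<Rightarrow> ('a \<Rightarrow> 'w set) \<Rightarrow> bool" where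
  "embedding_props imp W leW R i \<longleftrightarrow>
     (\<forall>a. upset W leW (i a)) \<and>
     i top = W \<and> (\<forall>a b. i (inf a b) = i a \<inter> i b) \<and>
     (\<forall>a b. a \<le> b \<longleftrightarrow> i a \<subseteq> i b) \<and>
     (\<forall>a b. i (imp a b) = kimp W R (i a) (i b))"

definition preserves_finite_joins :: "('a::order \<Rightarrow> 'w set) \<Rightarrow> bool" where
  "preserves_finite_joins i \<longleftrightarrow>
     (\<forall>z. is_least z \<longrightarrow> i z = {}) \<and> (\<forall>a b j. is_join a b j \<longrightarrow> i j = i a \<union> i b)"

end

theory Submission
  imports Defs
begin


definition filt :: "'a::bounded_semilattice_inf_top set \<Rightarrow> bool" where
 "filt G \<longleftrightarrow> top \<in> G \<and> (\<forall>x\<in>G. \<forall>y. x \<le> y \<longrightarrow> y \<in> G) \<and> (\<forall>x\<in>G. \<forall>y\<in>G. inf x y \<in> G)"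

lemma prime_ext:
  fixes Q :: "'a::bounded_semilattice_inf_top \<Rightarrow> 'a \<Rightarrow> bool" and I :: "'a set"
  assumes dist: "distributive TYPE('a)"
   and joins: "\<forall>a b::'a. \<exists>j. is_join a b j"
   and Qmono: "\<And>x y x' y'. Q x y \<Longrightarrow> x' \<le> x \<Longrightarrow> y \<le> y' \<Longrightarrow> Q x' y'"
   and Qrefl: "\<And>x y. x \<le> y \<Longrightarrow> Q x y"
   and Qtrans: "\<And>x y w. Q x y \<Longrightarrow> Q y w \<Longrightarrow> Q x w"
   and Qmeet: "\<And>x y w. Q x y \<Longrightarrow> Q x w \<Longrightarrow> Q x (inf y w)"
   and Qjoin: "\<And>x y j w. Q x w \<Longrightarrow> Q y w \<Longrightarrow> is_join x y j \<Longrightarrow> Q j w"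
   and Idown: "\<And>x y. x \<in> I \<Longrightarrow> y \<le> x \<Longrightarrow> y \<in> I"
   and Ijoin: "\<And>x y j. x \<in> I \<Longrightarrow> y \<in> I \<Longrightarrow> is_join x y j \<Longrightarrow> j \<in> I"
   and a: "\<And>c. c \<in> I \<Longrightarrow> \<not> Q a c"
  shows "\<exists>G. filt G \<and> (\<forall>x y. x \<in> G \<longrightarrow> Q x y \<longrightarrow> y \<in> G) \<and> a \<in> G \<and> G \<inter> I = {}
            \<and> (\<forall>x y j. is_join x y j \<longrightarrow> j \<in> G \<longrightarrow> x \<in> G \<or> y \<in> G)"
proof -
  define Fam where "Fam = {G. filt G \<and> (\<forall>x y. x \<in> G \<longrightarrow> Q x y \<longrightarrow> y \<in> G) \<and> a \<in> G \<and> G \<inter> I = {}}"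
  have G0f: "filt {c. Q a c}" unfolding filt_def
  proof (intro conjI ballI allI impI)
    show "top \<in> {c. Q a c}" using Qrefl by simp
  next
    fix x y assume "x \<in> {c. Q a c}" "x \<le> y" thus "y \<in> {c. Q a c}" using Qmono[of a x a y] by simp
  next
    fix x y assume "x \<in> {c. Q a c}" "y \<in> {c. Q a c}" thus "inf x y \<in> {c. Q a c}" using Qmeet by simp
  qed
  have G0c: "\<forall>x y. x \<in> {c. Q a c} \<longrightarrow> Q x y \<longrightarrow> y \<in> {c. Q a c}"
    by (intro allI impI) (simp, erule (1) Qtrans)
  have "{c. Q a c} \<in> Fam" unfolding Fam_def using G0f G0c a Qrefl[of a a] by blast
  hence ne: "Fam \<noteq> {}" by blast
  have ch: "\<Union>C \<in> Fam" if C: "C \<noteq> {}" "subset.chain Fam C" for C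
  proof -
    have CF: "\<forall>G\<in>C. G \<in> Fam" using C unfolding subset.chain_def by blast
    have tot: "\<forall>G1\<in>C. \<forall>G2\<in>C. G1 \<subseteq> G2 \<or> G2 \<subseteq> G1" using C unfolding subset.chain_def by blast
    have "filt (\<Union>C)"
      unfolding filt_def
    proof (intro conjI ballI allI impI)
      obtain G where "G \<in> C" using C(1) by blast
      moreover have "filt G" using CF \<open>G \<in> C\<close> unfolding Fam_def by blast
      ultimately show "top \<in> \<Union>C" unfolding filt_def by blast
    next
      fix x y assume "x \<in> \<Union>C" "x \<le> y" then obtain G where "G \<in> C" "x \<in> G" by blast
      moreover have "filt G" using CF \<open>G \<in> C\<close> unfolding Fam_def by blast
      ultimately show "y \<in> \<Union>C" using \<open>x \<le> y\<close> unfolding filt_def by blast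
    next
      fix x y assume "x \<in> \<Union>C" "y \<in> \<Union>C"
      then obtain G1 G2 where "G1 \<in> C" "G2 \<in> C" "x \<in> G1" "y \<in> G2" by blast
      with tot have "\<exists>G\<in>C. x \<in> G \<and> y \<in> G" by blast
      then obtain G where "G \<in> C" "x \<in> G" "y \<in> G" by blast
      moreover have "filt G" using CF \<open>G \<in> C\<close> unfolding Fam_def by blast
      ultimately show "inf x y \<in> \<Union>C" using filt_def by blast
    qed
    moreover have "\<forall>x y. x \<in> \<Union>C \<longrightarrow> Q x y \<longrightarrow> y \<in> \<Union>C"
    proof (intro allI impI)
      fix x y assume "x \<in> \<Union>C" "Q x y"
      then obtain G where "G \<in> C" "x \<in> G" by blast
      moreover have "\<forall>x y. x \<in> G \<longrightarrow> Q x y \<longrightarrow> y \<in> G" using CF \<open>G \<in> C\<close> unfolding Fam_def by blast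
      ultimately show "y \<in> \<Union>C" using \<open>Q x y\<close> by blast
    qed
    moreover have "a \<in> \<Union>C" using CF C(1) unfolding Fam_def by blast
    moreover have "\<Union>C \<inter> I = {}" using CF unfolding Fam_def by blast
    ultimately show ?thesis unfolding Fam_def by blast
  qed
  obtain M where M: "M \<in> Fam" and Mmax: "\<forall>X\<in>Fam. M \<subseteq> X \<longrightarrow> X = M"
    using subset_Zorn_nonempty[OF ne ch] by blast
  have Mf: "filt M" and MQ: "\<forall>x y. x \<in> M \<longrightarrow> Q x y \<longrightarrow> y \<in> M" and Ma: "a \<in> M" and MI: "M \<inter> I = {}"
    using M unfolding Fam_def by auto
  have ext: "\<exists>m\<in>M. \<exists>c\<in>I. Q (inf m x) c" if xM: "x \<notin> M" for x
  proof (rule ccontr)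
    assume nn: "\<not> ?thesis"
    define Mx where "Mx = {c. \<exists>m\<in>M. Q (inf m x) c}"
    have "Mx \<in> Fam" unfolding Fam_def
    proof (intro CollectI conjI allI impI)
      show "filt Mx" unfolding filt_def
      proof (intro conjI ballI allI impI)
        have "Q (inf a x) top" by (rule Qrefl) simp
        thus "top \<in> Mx" unfolding Mx_def using Ma by blast
      next
        fix u v assume "u \<in> Mx" "u \<le> v" then obtain m where "m \<in> M" "Q (inf m x) u" unfolding Mx_def by blast
        moreover have "Q (inf m x) v" by (rule Qmono[OF \<open>Q (inf m x) u\<close> order.refl \<open>u \<le> v\<close>])
        ultimately show "v \<in> Mx" unfolding Mx_def by blast
      next
        fix u v assume "u \<in> Mx" "v \<in> Mx"
        then obtain m m' where m: "m \<in> M" "Q (inf m x) u" "m' \<in> M" "Q (inf m' x) v" unfolding Mx_def by blast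
        have "inf m m' \<in> M" using m Mf unfolding filt_def by blast
        moreover have "Q (inf (inf m m') x) u" by (rule Qmono[OF m(2) _ order.refl]) (intro inf_mono inf.cobounded1 order.refl)
        moreover have "Q (inf (inf m m') x) v" by (rule Qmono[OF m(4) _ order.refl]) (intro inf_mono inf.cobounded2 order.refl)
        ultimately show "inf u v \<in> Mx" unfolding Mx_def using Qmeet[of "inf (inf m m') x" u v] by blast
      qed
    next
      fix u v assume "u \<in> Mx" "Q u v" then obtain m where "m \<in> M" "Q (inf m x) u" unfolding Mx_def by blast
      moreover have "Q (inf m x) v" by (rule Qtrans[OF \<open>Q (inf m x) u\<close> \<open>Q u v\<close>])
      ultimately show "v \<in> Mx" unfolding Mx_def by blast
    next
      have "Q (inf a x) a" by (rule Qrefl) simp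
      thus "a \<in> Mx" unfolding Mx_def using Ma by blast
    next
      show "Mx \<inter> I = {}" using nn unfolding Mx_def by blast
    qed
    moreover have "M \<subseteq> Mx"
    proof
      fix c assume "c \<in> M"
      moreover have "Q (inf c x) c" by (rule Qrefl) simp
      ultimately show "c \<in> Mx" unfolding Mx_def by blast
    qed
    moreover have "x \<in> Mx"
    proof -
      have "Q (inf top x) x" by (rule Qrefl) simp
      moreover have "top \<in> M" using Mf unfolding filt_def by blast
      ultimately show ?thesis unfolding Mx_def by blast
    qed
    ultimately show False using Mmax xM by blast
  qed
  have "\<forall>x y j. is_join x y j \<longrightarrow> j \<in> M \<longrightarrow> x \<in> M \<or> y \<in> M"
  proof (intro allI impI)
    fix x y j assume j: "is_join x y j" "j \<in> M"
    show "x \<in> M \<or> y \<in> M"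
    proof (rule ccontr)
      assume "\<not> (x \<in> M \<or> y \<in> M)"
      then obtain m c m' c' where mc: "m \<in> M" "c \<in> I" "Q (inf m x) c" "m' \<in> M" "c' \<in> I" "Q (inf m' y) c'"
        using ext[of x] ext[of y] by blast
      obtain cc where cc: "is_join c c' cc" using joins by blast
      have ccI: "cc \<in> I" using Ijoin mc cc by blast
      define mm where "mm = inf m m'"
      have mmM: "mm \<in> M" using mc Mf unfolding filt_def mm_def by blast
      have cc1: "c \<le> cc" "c' \<le> cc" using cc unfolding is_join_def by blast+
      have c1: "Q (inf mm x) cc" by (rule Qmono[OF mc(3) _ cc1(1)]) (unfold mm_def, intro inf_mono inf.cobounded1 order.refl)
      have c2: "Q (inf mm y) cc" by (rule Qmono[OF mc(6) _ cc1(2)]) (unfold mm_def, intro inf_mono inf.cobounded2 order.refl)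
      have "is_join (inf mm x) (inf mm y) (inf mm j)" using dist j(1) unfolding distributive_def by blast
      hence "Q (inf mm j) cc" using Qjoin c1 c2 by blast
      moreover have "inf mm j \<in> M" using mmM j Mf unfolding filt_def by blast
      ultimately have "cc \<in> M" using MQ by blast
      thus False using ccI MI by blast
    qed
  qed
  thus ?thesis using Mf MQ Ma MI by blast
qed



definition base :: "('a::bounded_semilattice_inf_top \<Rightarrow> 'a \<Rightarrow> 'a) \<Rightarrow> 'a set \<Rightarrow> 'a set \<Rightarrow> bool" where
 "base imp Fw G \<longleftrightarrow> (\<forall>x y. imp x y \<in> Fw \<longrightarrow> x \<in> G \<longrightarrow> y \<in> G)"

definition leW_of :: "('a::bounded_semilattice_inf_top \<Rightarrow> 'a \<Rightarrow> 'a) \<Rightarrow> 'a set set \<Rightarrow> 'a set \<Rightarrow> 'a set \<Rightarrow> bool" where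
 "leW_of imp W u v \<longleftrightarrow> u \<subseteq> v \<and> (\<forall>Fw\<in>W. base imp Fw u \<longrightarrow> base imp Fw v)"

definition R_of :: "('a::bounded_semilattice_inf_top \<Rightarrow> 'a \<Rightarrow> 'a) \<Rightarrow> 'a set set \<Rightarrow> ('a set \<times> 'a set) set" where
 "R_of imp W = {(Fw, G). Fw \<in> W \<and> G \<in> W \<and> base imp Fw G}"

definition i_of :: "'a set set \<Rightarrow> 'a \<Rightarrow> 'a set set" where
 "i_of W a = {Fw \<in> W. a \<in> Fw}"

lemma sa_anti: "strong_algebra imp \<Longrightarrow> a' \<le> a \<Longrightarrow> imp a b \<le> imp a' b"
  unfolding strong_algebra_def by blast
lemma sa_mono: "strong_algebra imp \<Longrightarrow> b \<le> b' \<Longrightarrow> imp a b \<le> imp a b'"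
  unfolding strong_algebra_def by blast
lemma sa_refl: "strong_algebra imp \<Longrightarrow> top \<le> imp a a"
  unfolding strong_algebra_def by blast
lemma sa_trans: "strong_algebra imp \<Longrightarrow> inf (imp a b) (imp b c) \<le> imp a c"
  unfolding strong_algebra_def by blast
lemma sa_le: "strong_algebra imp \<Longrightarrow> a \<le> b \<Longrightarrow> imp a b = top"
proof -
  assume "strong_algebra imp" "a \<le> b"
  hence "top \<le> imp a b" using order.trans[OF sa_refl[of imp a] sa_mono[of imp a b a]] by blast
  thus ?thesis by (rule top_le)
qed

lemma filt_top: "filt G \<Longrightarrow> top \<in> G" unfolding filt_def by blast
lemma filt_up: "filt G \<Longrightarrow> x \<in> G \<Longrightarrow> x \<le> y \<Longrightarrow> y \<in> G" unfolding filt_def by blast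
lemma filt_inf: "filt G \<Longrightarrow> x \<in> G \<Longrightarrow> y \<in> G \<Longrightarrow> inf x y \<in> G" unfolding filt_def by blast
lemma filt_inf_iff: "filt G \<Longrightarrow> inf x y \<in> G \<longleftrightarrow> x \<in> G \<and> y \<in> G"
  by (meson filt_inf filt_up inf.cobounded1 inf.cobounded2)

lemma temp_T1:
  assumes "temporal imp nabla" shows "nabla b \<le> c \<longleftrightarrow> b \<le> imp top c"
proof -
  have "inf top (nabla b) \<le> c \<longleftrightarrow> b \<le> imp top c" using assms unfolding temporal_def by blast
  thus ?thesis by simp
qed

lemma temp_mono:
  assumes "temporal imp nabla" "x \<le> y" shows "nabla x \<le> nabla y"
proof -
  have "y \<le> imp top (nabla y)" using temp_T1[OF assms(1)] by blast
  hence "x \<le> imp top (nabla y)" using assms(2) by (rule order.trans[rotated])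
  thus ?thesis using temp_T1[OF assms(1)] by blast
qed

lemma temp_mp:
  assumes "temporal imp nabla" shows "inf a (nabla (imp a b)) \<le> b"
  using assms unfolding temporal_def by blast

lemma temp_join:
  assumes "temporal imp nabla" "is_join x y j" shows "is_join (nabla x) (nabla y) (nabla j)"
proof -
  have j: "x \<le> j" "y \<le> j" "\<And>d. x \<le> d \<Longrightarrow> y \<le> d \<Longrightarrow> j \<le> d" using assms(2) unfolding is_join_def by auto
  have "nabla j \<le> d" if "nabla x \<le> d" "nabla y \<le> d" for d
  proof -
    have "x \<le> imp top d" "y \<le> imp top d" using that temp_T1[OF assms(1)] by auto
    hence "j \<le> imp top d" using j(3) by blast
    thus ?thesis using temp_T1[OF assms(1)] by blast
  qed
  thus ?thesis unfolding is_join_def using temp_mono[OF assms(1) j(1)] temp_mono[OF assms(1) j(2)] by blast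
qed

lemma temp_least:
  assumes "temporal imp nabla" "is_least z" shows "nabla z = z"
proof -
  have "z \<le> imp top z" using assms(2) unfolding is_least_def by blast
  hence "nabla z \<le> z" using temp_T1[OF assms(1)] by blast
  moreover have "z \<le> nabla z" using assms(2) unfolding is_least_def by blast
  ultimately show ?thesis by (rule order.antisym)
qed

lemma temp_base:
  assumes sa: "strong_algebra imp" and t: "temporal imp nabla" and Fw: "filt Fw" and G: "filt G"
  shows "base imp Fw G \<longleftrightarrow> (\<forall>x\<in>Fw. nabla x \<in> G)"
proof
  assume b: "base imp Fw G"
  show "\<forall>x\<in>Fw. nabla x \<in> G"
  proof
    fix x assume "x \<in> Fw"
    moreover have "x \<le> imp top (nabla x)" using temp_T1[OF t] by blast
    ultimately have "imp top (nabla x) \<in> Fw" using Fw filt_up by blast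
    thus "nabla x \<in> G" using b filt_top[OF G] unfolding base_def by blast
  qed
next
  assume n: "\<forall>x\<in>Fw. nabla x \<in> G"
  show "base imp Fw G" unfolding base_def
  proof (intro allI impI)
    fix x y assume "imp x y \<in> Fw" "x \<in> G"
    hence "inf x (nabla (imp x y)) \<in> G" using n G filt_inf by blast
    thus "y \<in> G" using temp_mp[OF t] G filt_up by blast
  qed
qed



locale gen =
  fixes imp :: "'a::bounded_semilattice_inf_top \<Rightarrow> 'a \<Rightarrow> 'a" and W :: "'a set set"
  assumes sa: "strong_algebra imp" and im: "internalizes_meets imp"
   and W1: "\<And>G. G \<in> W \<Longrightarrow> filt G"
   and W2: "\<And>a b. \<not> a \<le> b \<Longrightarrow> \<exists>G\<in>W. a \<in> G \<and> b \<notin> G"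
   and W3: "\<And>Fw a b. Fw \<in> W \<Longrightarrow> imp a b \<notin> Fw \<Longrightarrow> \<exists>G\<in>W. base imp Fw G \<and> a \<in> G \<and> b \<notin> G"
   and W4: "\<And>nabla v a. temporal imp nabla \<Longrightarrow> v \<in> W \<Longrightarrow> nabla a \<in> v \<Longrightarrow> \<exists>u\<in>W. a \<in> u \<and> (\<forall>x\<in>u. nabla x \<in> v)"
   and W5: "\<And>nabla Fw. temporal imp nabla \<Longrightarrow> alg_sat wF imp nabla \<Longrightarrow> Fw \<in> W \<Longrightarrow> \<exists>G\<in>W. base imp Fw G"
   and W6: "\<And>f G. mono f \<Longrightarrow> f top = top \<Longrightarrow> (\<forall>x y. f (inf x y) = inf (f x) (f y))
      \<Longrightarrow> (\<forall>x y j. is_join x y j \<longrightarrow> is_join (f x) (f y) (f j)) \<Longrightarrow> (\<forall>z. is_least z \<longrightarrow> f z = z)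
      \<Longrightarrow> G \<in> W \<Longrightarrow> f -` G \<in> W"
begin

lemma kf: "kripke_frame W (leW_of imp W) (R_of imp W)"
  unfolding kripke_frame_def
proof (intro conjI ballI allI impI)
  fix u v u' v' assume h: "(u, v) \<in> R_of imp W \<and> u' \<in> W \<and> v' \<in> W \<and> leW_of imp W u' u \<and> leW_of imp W v v'"
  hence b: "base imp u v" "u' \<subseteq> u" "v \<in> W" "u' \<in> W" unfolding R_of_def leW_of_def by auto
  hence "base imp u' v" unfolding base_def by blast
  hence "base imp u' v'" using h b unfolding leW_of_def by blast
  thus "(u', v') \<in> R_of imp W" using h b unfolding R_of_def by blast
qed (auto simp: leW_of_def R_of_def)

lemma ep: "embedding_props imp W (leW_of imp W) (R_of imp W) (i_of W)"
  unfolding embedding_props_def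
proof (intro conjI allI)
  fix a show "upset W (leW_of imp W) (i_of W a)"
    unfolding upset_def i_of_def leW_of_def by blast
next
  show "i_of W top = W" unfolding i_of_def using W1 filt_top by blast
next
  fix a b show "i_of W (inf a b) = i_of W a \<inter> i_of W b"
    unfolding i_of_def using W1 filt_inf_iff by blast
next
  fix a b show "a \<le> b \<longleftrightarrow> i_of W a \<subseteq> i_of W b"
  proof
    assume "a \<le> b" thus "i_of W a \<subseteq> i_of W b" unfolding i_of_def using W1 filt_up by blast
  next
    assume "i_of W a \<subseteq> i_of W b" thus "a \<le> b" using W2[of a b] unfolding i_of_def by blast
  qed
next
  fix a b show "i_of W (imp a b) = kimp W (R_of imp W) (i_of W a) (i_of W b)"
  proof
    show "i_of W (imp a b) \<subseteq> kimp W (R_of imp W) (i_of W a) (i_of W b)"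
      unfolding i_of_def kimp_def R_of_def base_def by blast
  next
    show "kimp W (R_of imp W) (i_of W a) (i_of W b) \<subseteq> i_of W (imp a b)"
    proof
      fix Fw assume k: "Fw \<in> kimp W (R_of imp W) (i_of W a) (i_of W b)"
      hence FW: "Fw \<in> W" unfolding kimp_def by blast
      show "Fw \<in> i_of W (imp a b)"
      proof (rule ccontr)
        assume "Fw \<notin> i_of W (imp a b)"
        hence "imp a b \<notin> Fw" using FW unfolding i_of_def by blast
        then obtain G where "G \<in> W" "base imp Fw G" "a \<in> G" "b \<notin> G" using W3 FW by blast
        thus False using k FW unfolding kimp_def R_of_def i_of_def by blast
      qed
    qed
  qed
qed

context
  fixes nabla assumes t: "temporal imp nabla"
begin

lemma leW_t: "u \<in> W \<Longrightarrow> v \<in> W \<Longrightarrow> leW_of imp W u v \<longleftrightarrow> u \<subseteq> v"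
  unfolding leW_of_def using temp_base[OF sa t] W1 by blast

lemma R_t: "(u, v) \<in> R_of imp W \<longleftrightarrow> u \<in> W \<and> v \<in> W \<and> (\<forall>x\<in>u. nabla x \<in> v)"
  unfolding R_of_def using temp_base[OF sa t] W1 by blast

lemma kn: "i_of W (nabla a) = knabla W (R_of imp W) (i_of W a)"
proof
  show "i_of W (nabla a) \<subseteq> knabla W (R_of imp W) (i_of W a)"
  proof
    fix v assume "v \<in> i_of W (nabla a)"
    hence v: "v \<in> W" "nabla a \<in> v" unfolding i_of_def by auto
    then obtain u where "u \<in> W" "a \<in> u" "\<forall>x\<in>u. nabla x \<in> v" using W4[OF t] by blast
    thus "v \<in> knabla W (R_of imp W) (i_of W a)" unfolding knabla_def i_of_def using R_t v by blast
  qed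
next
  show "knabla W (R_of imp W) (i_of W a) \<subseteq> i_of W (nabla a)"
    unfolding knabla_def i_of_def using R_t by blast
qed

lemma fN: assumes "alg_sat N imp nabla" shows "frame_sat N W (leW_of imp W) (R_of imp W)"
proof -
  have top: "nabla top = top" and mt: "\<forall>x y. nabla (inf x y) = inf (nabla x) (nabla y)" using assms by auto
  have mono: "mono nabla" unfolding mono_def using temp_mono[OF t] by blast
  have img: "(\<lambda>v. nabla -` v) ` W \<subseteq> W"
    using W6[OF mono top mt] temp_join[OF t] temp_least[OF t] by blast
  show ?thesis unfolding frame_sat.simps
  proof (intro exI[of _ "\<lambda>v. nabla -` v"] conjI ballI impI img)
    fix u v assume uv: "u \<in> W" "v \<in> W" "leW_of imp W u v"
    hence "u \<subseteq> v" using leW_t by blast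
    hence "nabla -` u \<subseteq> nabla -` v" by blast
    thus "leW_of imp W (nabla -` u) (nabla -` v)" using leW_t img uv by blast
  next
    fix u v assume uv: "u \<in> W" "v \<in> W"
    have "nabla -` v \<in> W" using img uv by blast
    thus "(u, v) \<in> R_of imp W \<longleftrightarrow> leW_of imp W u (nabla -` v)"
      using leW_t[OF uv(1)] R_t uv by blast
  qed
qed

lemma fH: assumes "alg_sat H imp nabla" shows "frame_sat H W (leW_of imp W) (R_of imp W)"
proof -
  have top: "nabla top = top" and mt: "\<forall>x y. nabla (inf x y) = inf (nabla x) (nabla y)"
    and hi: "\<forall>a b. nabla (imp a b) = imp (nabla a) (nabla b)" using assms by auto
  define g where "g = (\<lambda>c. imp top c)"
  have gn: "g (nabla c) = c" and ng: "nabla (g c) = c" for c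
  proof -
    have e: "nabla (g c) = g (nabla c)" unfolding g_def using hi top by simp
    have c1: "nabla (g c) \<le> c" unfolding g_def using temp_T1[OF t] by blast
    have c2: "c \<le> g (nabla c)" unfolding g_def using temp_T1[OF t] by blast
    show "g (nabla c) = c" using e c1 c2 by (metis order.antisym)
    show "nabla (g c) = c" using e c1 c2 by (metis order.antisym)
  qed
  have mono: "mono nabla" unfolding mono_def using temp_mono[OF t] by blast
  have img: "(\<lambda>v. nabla -` v) ` W \<subseteq> W"
    using W6[OF mono top mt] temp_join[OF t] temp_least[OF t] by blast
  have gmono: "mono g" unfolding mono_def g_def using sa_mono[OF sa] by blast
  have gtop: "g top = top" unfolding g_def using sa_le[OF sa] by simp
  have gmt: "\<forall>x y. g (inf x y) = inf (g x) (g y)" unfolding g_def using im unfolding internalizes_meets_def by blast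
  have gj: "\<forall>x y j. is_join x y j \<longrightarrow> is_join (g x) (g y) (g j)"
  proof (intro allI impI)
    fix x y j :: 'a assume j: "is_join x y j"
    have "g j \<le> d" if "g x \<le> d" "g y \<le> d" for d
    proof -
      have "x \<le> nabla d" using temp_mono[OF t that(1)] ng by simp
      moreover have "y \<le> nabla d" using temp_mono[OF t that(2)] ng by simp
      ultimately have "j \<le> nabla d" using j unfolding is_join_def by blast
      hence "g j \<le> g (nabla d)" using gmono unfolding mono_def by blast
      thus ?thesis using gn by simp
    qed
    moreover have "g x \<le> g j" "g y \<le> g j" using j gmono unfolding is_join_def mono_def by blast+
    ultimately show "is_join (g x) (g y) (g j)" unfolding is_join_def by blast
  qed
  have gl: "\<forall>z. is_least z \<longrightarrow> g z = z"
  proof (intro allI impI)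
    fix z :: 'a assume z: "is_least z"
    have "g z \<le> d" for d
    proof -
      have "z \<le> nabla d" using z unfolding is_least_def by blast
      hence "g z \<le> g (nabla d)" using gmono unfolding mono_def by blast
      thus ?thesis using gn by simp
    qed
    moreover have "z \<le> g z" using z unfolding is_least_def by blast
    ultimately show "g z = z" by (metis order.antisym)
  qed
  have gimg: "G \<in> W \<Longrightarrow> g -` G \<in> W" for G using W6[OF gmono gtop gmt gj gl] by blast
  have bka: "g -` (nabla -` u) = u" for u using ng by auto
  have bkb: "nabla -` (g -` u) = u" for u using gn by auto
  have bij: "bij_betw (\<lambda>v. nabla -` v) W W"
    unfolding bij_betw_def
  proof
    show "inj_on (\<lambda>v. nabla -` v) W" unfolding inj_on_def using bka by metis
    show "(\<lambda>v. nabla -` v) ` W = W"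
    proof
      show "(\<lambda>v. nabla -` v) ` W \<subseteq> W" by (rule img)
      show "W \<subseteq> (\<lambda>v. nabla -` v) ` W"
      proof
        fix G assume "G \<in> W"
        hence "g -` G \<in> W" by (rule gimg)
        thus "G \<in> (\<lambda>v. nabla -` v) ` W" using bkb[of G] by (metis image_eqI)
      qed
    qed
  qed
  show ?thesis unfolding frame_sat.simps
  proof (intro exI[of _ "\<lambda>v. nabla -` v"] conjI ballI bij)
    fix u v assume uv: "u \<in> W" "v \<in> W"
    have i2: "nabla -` u \<in> W" "nabla -` v \<in> W" using img uv by auto
    have "u \<subseteq> v \<longleftrightarrow> nabla -` u \<subseteq> nabla -` v"
    proof
      assume "nabla -` u \<subseteq> nabla -` v"
      hence "g -` (nabla -` u) \<subseteq> g -` (nabla -` v)" by blast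
      thus "u \<subseteq> v" using bka by simp
    qed blast
    thus "leW_of imp W u v \<longleftrightarrow> leW_of imp W (nabla -` u) (nabla -` v)"
      using leW_t[OF uv] leW_t[OF i2] by simp
    show "(u, v) \<in> R_of imp W \<longleftrightarrow> leW_of imp W u (nabla -` v)"
      using leW_t[OF uv(1) i2(2)] R_t uv by blast
  qed
qed

lemma fP: assumes "alg_sat P imp nabla" shows "frame_sat P W (leW_of imp W) (R_of imp W)"
proof -
  have p: "nabla a \<le> a" for a using assms by simp
  show ?thesis unfolding frame_sat.simps
  proof (intro ballI, clarify)
    fix u v assume uv: "(u, v) \<in> R_of imp W"
    hence "u \<in> W" "v \<in> W" "\<forall>x\<in>u. nabla x \<in> v" using R_t by auto
    moreover have "u \<subseteq> v"
    proof
      fix x assume "x \<in> u"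
      hence "nabla x \<in> v" using \<open>\<forall>x\<in>u. nabla x \<in> v\<close> by blast
      thus "x \<in> v" using W1[OF \<open>v \<in> W\<close>] p filt_up by blast
    qed
    ultimately show "leW_of imp W u v" using leW_t by blast
  qed
qed

lemma fF: assumes "alg_sat F imp nabla" shows "frame_sat F W (leW_of imp W) (R_of imp W)"
proof -
  have p: "a \<le> nabla a" for a using assms by simp
  show ?thesis unfolding frame_sat.simps
  proof
    fix u assume "u \<in> W"
    thus "(u, u) \<in> R_of imp W" using R_t W1 p filt_up by blast
  qed
qed

lemma fwF: assumes "alg_sat wF imp nabla" shows "frame_sat wF W (leW_of imp W) (R_of imp W)"
  unfolding frame_sat.simps R_of_def using W5[OF t assms] by blast

lemma fall: "alg_sat \<rho> imp nabla \<Longrightarrow> frame_sat \<rho> W (leW_of imp W) (R_of imp W)"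
  by (cases \<rho>) (simp_all add: fN fH fP fF fwF del: alg_sat.simps frame_sat.simps)

end

lemma generic: "kripke_frame W (leW_of imp W) (R_of imp W) \<and> embedding_props imp W (leW_of imp W) (R_of imp W) (i_of W)
  \<and> (\<forall>nabla. temporal imp nabla \<longrightarrow> (\<forall>a. i_of W (nabla a) = knabla W (R_of imp W) (i_of W a))
       \<and> (\<forall>Rs :: cond set. (\<forall>\<rho>\<in>Rs. alg_sat \<rho> imp nabla) \<longrightarrow> (\<forall>\<rho>\<in>Rs. frame_sat \<rho> W (leW_of imp W) (R_of imp W))))"
  using kf ep kn fall by blast

end


lemma le3: "(x::'a::order) \<le> y \<Longrightarrow> x' \<le> x \<Longrightarrow> y \<le> y' \<Longrightarrow> x' \<le> y'"
proof -
  assume a: "x \<le> y" "x' \<le> x" "y \<le> y'"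
  show ?thesis using order.trans[OF order.trans[OF a(2) a(1)] a(3)] .
qed

lemma filt_principal: "filt {c. (a::'a::bounded_semilattice_inf_top) \<le> c}"
  unfolding filt_def using order.trans[of a] by auto

lemma filt_UNIV: "filt (UNIV :: 'a::bounded_semilattice_inf_top set)"
  unfolding filt_def by blast

lemma filt_vimage:
  fixes f :: "'a::bounded_semilattice_inf_top \<Rightarrow> 'a"
  assumes "mono f" "f top = top" "\<forall>x y. f (inf x y) = inf (f x) (f y)" "filt G"
  shows "filt (f -` G)"
  unfolding filt_def
proof (intro conjI ballI allI impI)
  show "top \<in> f -` G" using assms filt_top by simp
next
  fix x y assume "x \<in> f -` G" "x \<le> y"
  thus "y \<in> f -` G" using assms(1,4) filt_up unfolding mono_def by blast
next
  fix x y assume "x \<in> f -` G" "y \<in> f -` G"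
  thus "inf x y \<in> f -` G" using assms(3,4) filt_inf by simp
qed

lemma filt_imp:
  assumes sa: "strong_algebra imp" and im: "internalizes_meets imp" and F: "filt Fw"
  shows "filt {c. imp a c \<in> Fw}"
  unfolding filt_def
proof (intro conjI ballI allI impI)
  show "top \<in> {c. imp a c \<in> Fw}" using sa_le[OF sa, of a top] filt_top[OF F] by simp
next
  fix x y assume "x \<in> {c. imp a c \<in> Fw}" "x \<le> y"
  thus "y \<in> {c. imp a c \<in> Fw}" using sa_mono[OF sa, of x y a] filt_up[OF F] by blast
next
  fix x y assume "x \<in> {c. imp a c \<in> Fw}" "y \<in> {c. imp a c \<in> Fw}"
  thus "inf x y \<in> {c. imp a c \<in> Fw}" using im filt_inf[OF F] unfolding internalizes_meets_def by simp
qed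

lemma imp_trans_mem:
  assumes sa: "strong_algebra imp" and F: "filt Fw" and "imp x y \<in> Fw" "imp y w \<in> Fw"
  shows "imp x w \<in> Fw"
  using filt_up[OF F filt_inf[OF F assms(3,4)] sa_trans[OF sa]] .

lemma imp_mono_mem:
  assumes sa: "strong_algebra imp" and F: "filt Fw" and "imp x y \<in> Fw" "x' \<le> x" "y \<le> y'"
  shows "imp x' y' \<in> Fw"
proof -
  have "imp x y \<le> imp x' y" using sa_anti[OF sa assms(4)] .
  also have "\<dots> \<le> imp x' y'" using sa_mono[OF sa assms(5)] .
  finally show ?thesis using filt_up[OF F assms(3)] by blast
qed

lemma gen_all:
  fixes imp :: "'a::bounded_semilattice_inf_top \<Rightarrow> 'a \<Rightarrow> 'a"
  assumes sa: "strong_algebra imp" and im: "internalizes_meets imp"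
  shows "gen imp {G. filt G}"
proof
  show "\<And>G. G \<in> {G. filt G} \<Longrightarrow> filt G" by simp
next
  fix a b :: 'a assume "\<not> a \<le> b"
  thus "\<exists>G\<in>{G. filt G}. a \<in> G \<and> b \<notin> G" using filt_principal[of a] by auto
next
  fix Fw and a b :: 'a assume F: "Fw \<in> {G. filt G}" and ab: "imp a b \<notin> Fw"
  hence F': "filt Fw" by simp
  have "base imp Fw {c. imp a c \<in> Fw}" unfolding base_def using imp_trans_mem[OF sa F'] by blast
  moreover have "a \<in> {c. imp a c \<in> Fw}" using sa_le[OF sa, of a a] filt_top[OF F'] by simp
  ultimately show "\<exists>G\<in>{G. filt G}. base imp Fw G \<and> a \<in> G \<and> b \<notin> G"
    using filt_imp[OF sa im F', of a] ab by auto
next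
  fix nabla and v :: "'a set" and a :: 'a assume t: "temporal imp nabla" and v: "v \<in> {G. filt G}" "nabla a \<in> v"
  have "\<forall>x\<in>{c. a \<le> c}. nabla x \<in> v" using temp_mono[OF t] filt_up v by blast
  thus "\<exists>u\<in>{G. filt G}. a \<in> u \<and> (\<forall>x\<in>u. nabla x \<in> v)" using filt_principal[of a] by auto
next
  fix nabla Fw show "\<exists>G\<in>{G. filt G}. base imp Fw G" using filt_UNIV unfolding base_def by blast
next
  fix f :: "'a \<Rightarrow> 'a" and G :: "'a set"
  assume "mono f" "f top = top" "\<forall>x y. f (inf x y) = inf (f x) (f y)" "G \<in> {G. filt G}"
  thus "f -` G \<in> {G. filt G}" using filt_vimage by auto
qed (rule sa, rule im)

definition primes :: "'a::bounded_semilattice_inf_top set set" where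
  "primes = {G. filt G \<and> (\<forall>z. is_least z \<longrightarrow> z \<notin> G) \<and> (\<forall>x y j. is_join x y j \<longrightarrow> j \<in> G \<longrightarrow> x \<in> G \<or> y \<in> G)}"

lemma gen_primes:
  fixes imp :: "'a::bounded_semilattice_inf_top \<Rightarrow> 'a \<Rightarrow> 'a"
  assumes sa: "strong_algebra imp" and im: "internalizes_meets imp"
   and hj: "has_finite_joins TYPE('a)" and dist: "distributive TYPE('a)" and ij: "internalizes_joins imp"
  shows "gen imp primes"
proof -
  have joins: "\<forall>a b::'a. \<exists>j. is_join a b j" using hj unfolding has_finite_joins_def by blast
  {
    fix a b :: 'a assume ab: "\<not> a \<le> b"
    have "\<exists>G. filt G \<and> (\<forall>x y. x \<in> G \<longrightarrow> x \<le> y \<longrightarrow> y \<in> G) \<and> a \<in> G \<and> G \<inter> {x. x \<le> b} = {}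
            \<and> (\<forall>x y j. is_join x y j \<longrightarrow> j \<in> G \<longrightarrow> x \<in> G \<or> y \<in> G)"
    proof (rule prime_ext[OF dist joins])
      show "\<And>x y x' y' :: 'a. x \<le> y \<Longrightarrow> x' \<le> x \<Longrightarrow> y \<le> y' \<Longrightarrow> x' \<le> y'" by (erule (2) le3)
      show "\<And>x y w :: 'a. x \<le> y \<Longrightarrow> y \<le> w \<Longrightarrow> x \<le> w" by (erule order.trans)
      show "\<And>x y w :: 'a. x \<le> y \<Longrightarrow> x \<le> w \<Longrightarrow> x \<le> inf y w" by simp
      show "\<And>x y j w :: 'a. x \<le> w \<Longrightarrow> y \<le> w \<Longrightarrow> is_join x y j \<Longrightarrow> j \<le> w" unfolding is_join_def by blast
      show "\<And>x y :: 'a. x \<in> {x. x \<le> b} \<Longrightarrow> y \<le> x \<Longrightarrow> y \<in> {x. x \<le> b}" unfolding mem_Collect_eq by (rule order.trans)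
      show "\<And>x y j :: 'a. x \<in> {x. x \<le> b} \<Longrightarrow> y \<in> {x. x \<le> b} \<Longrightarrow> is_join x y j \<Longrightarrow> j \<in> {x. x \<le> b}"
        unfolding is_join_def by blast
      show "\<And>c :: 'a. c \<in> {x. x \<le> b} \<Longrightarrow> \<not> a \<le> c" using ab order.trans[of a _ b] by blast
    qed simp
    then obtain G where G: "filt G" "a \<in> G" "G \<inter> {x. x \<le> b} = {}"
       "\<forall>x y j. is_join x y j \<longrightarrow> j \<in> G \<longrightarrow> x \<in> G \<or> y \<in> G" by blast
    have "\<forall>z. is_least z \<longrightarrow> z \<notin> G" using G(3) unfolding is_least_def by blast
    hence "\<exists>G\<in>primes. a \<in> G \<and> b \<notin> G" using G unfolding primes_def by blast
  }
  note W2 = this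
  {
    fix Fw and a b :: 'a assume F: "Fw \<in> primes" and ab: "imp a b \<notin> Fw"
    have F': "filt Fw" using F unfolding primes_def by blast
    have "\<exists>G. filt G \<and> (\<forall>x y. x \<in> G \<longrightarrow> imp x y \<in> Fw \<longrightarrow> y \<in> G) \<and> a \<in> G \<and> G \<inter> {x. x \<le> b} = {}
            \<and> (\<forall>x y j. is_join x y j \<longrightarrow> j \<in> G \<longrightarrow> x \<in> G \<or> y \<in> G)"
    proof (rule prime_ext[OF dist joins])
      show "\<And>x y x' y'. imp x y \<in> Fw \<Longrightarrow> x' \<le> x \<Longrightarrow> y \<le> y' \<Longrightarrow> imp x' y' \<in> Fw"
        using imp_mono_mem[OF sa F'] by blast
      show "\<And>x y. x \<le> y \<Longrightarrow> imp x y \<in> Fw" using sa_le[OF sa] filt_top[OF F'] by simp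
      show "\<And>x y w. imp x y \<in> Fw \<Longrightarrow> imp y w \<in> Fw \<Longrightarrow> imp x w \<in> Fw" using imp_trans_mem[OF sa F'] by blast
      show "\<And>x y w. imp x y \<in> Fw \<Longrightarrow> imp x w \<in> Fw \<Longrightarrow> imp x (inf y w) \<in> Fw"
        using im filt_inf[OF F'] unfolding internalizes_meets_def by simp
      show "\<And>x y j w. imp x w \<in> Fw \<Longrightarrow> imp y w \<in> Fw \<Longrightarrow> is_join x y j \<Longrightarrow> imp j w \<in> Fw"
        using ij filt_inf[OF F'] unfolding internalizes_joins_def by simp
      show "\<And>x y :: 'a. x \<in> {x. x \<le> b} \<Longrightarrow> y \<le> x \<Longrightarrow> y \<in> {x. x \<le> b}" unfolding mem_Collect_eq by (rule order.trans)
      show "\<And>x y j :: 'a. x \<in> {x. x \<le> b} \<Longrightarrow> y \<in> {x. x \<le> b} \<Longrightarrow> is_join x y j \<Longrightarrow> j \<in> {x. x \<le> b}"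
        unfolding is_join_def by blast
      show "\<And>c. c \<in> {x. x \<le> b} \<Longrightarrow> imp a c \<notin> Fw" using ab imp_mono_mem[OF sa F'] by blast
    qed
    then obtain G where G: "filt G" "\<forall>x y. x \<in> G \<longrightarrow> imp x y \<in> Fw \<longrightarrow> y \<in> G" "a \<in> G" "G \<inter> {x. x \<le> b} = {}"
       "\<forall>x y j. is_join x y j \<longrightarrow> j \<in> G \<longrightarrow> x \<in> G \<or> y \<in> G" by blast
    have "\<forall>z. is_least z \<longrightarrow> z \<notin> G" using G(4) unfolding is_least_def by blast
    moreover have "base imp Fw G" using G(2) unfolding base_def by blast
    ultimately have "\<exists>G\<in>primes. base imp Fw G \<and> a \<in> G \<and> b \<notin> G" using G unfolding primes_def by blast
  }
  note W3 = this
  show ?thesis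
  proof (rule gen.intro[OF sa im])
  show "\<And>G :: 'a set. G \<in> primes \<Longrightarrow> filt G" unfolding primes_def by blast
  show "\<And>a b :: 'a. \<not> a \<le> b \<Longrightarrow> \<exists>G\<in>primes. a \<in> G \<and> b \<notin> G" by (rule W2)
  show "\<And>Fw a b. Fw \<in> primes \<Longrightarrow> imp a b \<notin> Fw \<Longrightarrow> \<exists>G\<in>primes. base imp Fw G \<and> a \<in> G \<and> b \<notin> G" by (rule W3)
next
  fix nabla and v :: "'a set" and a :: 'a assume t: "temporal imp nabla" and v: "v \<in> primes" "nabla a \<in> v"
  have vf: "filt v" and vl: "\<forall>z. is_least z \<longrightarrow> z \<notin> v" and vp: "\<forall>x y j. is_join x y j \<longrightarrow> j \<in> v \<longrightarrow> x \<in> v \<or> y \<in> v"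
    using v unfolding primes_def by auto
  have "\<exists>G. filt G \<and> (\<forall>x y. x \<in> G \<longrightarrow> x \<le> y \<longrightarrow> y \<in> G) \<and> a \<in> G \<and> G \<inter> {x. nabla x \<notin> v} = {}
            \<and> (\<forall>x y j. is_join x y j \<longrightarrow> j \<in> G \<longrightarrow> x \<in> G \<or> y \<in> G)"
  proof (rule prime_ext[OF dist joins])
    show "\<And>x y x' y' :: 'a. x \<le> y \<Longrightarrow> x' \<le> x \<Longrightarrow> y \<le> y' \<Longrightarrow> x' \<le> y'" by (erule (2) le3)
    show "\<And>x y w :: 'a. x \<le> y \<Longrightarrow> y \<le> w \<Longrightarrow> x \<le> w" by (erule order.trans)
    show "\<And>x y w :: 'a. x \<le> y \<Longrightarrow> x \<le> w \<Longrightarrow> x \<le> inf y w" by simp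
    show "\<And>x y j w :: 'a. x \<le> w \<Longrightarrow> y \<le> w \<Longrightarrow> is_join x y j \<Longrightarrow> j \<le> w" unfolding is_join_def by blast
    show "\<And>x y :: 'a. x \<in> {x. nabla x \<notin> v} \<Longrightarrow> y \<le> x \<Longrightarrow> y \<in> {x. nabla x \<notin> v}"
    proof -
      fix x y :: 'a assume h: "x \<in> {x. nabla x \<notin> v}" "y \<le> x"
      have "nabla y \<le> nabla x" using temp_mono[OF t h(2)] .
      thus "y \<in> {x. nabla x \<notin> v}" using h(1) filt_up[OF vf, of "nabla y" "nabla x"] by auto
    qed
    show "\<And>x y j :: 'a. x \<in> {x. nabla x \<notin> v} \<Longrightarrow> y \<in> {x. nabla x \<notin> v} \<Longrightarrow> is_join x y j \<Longrightarrow> j \<in> {x. nabla x \<notin> v}"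
    proof -
      fix x y j :: 'a assume h: "x \<in> {x. nabla x \<notin> v}" "y \<in> {x. nabla x \<notin> v}" "is_join x y j"
      have "is_join (nabla x) (nabla y) (nabla j)" using temp_join[OF t h(3)] .
      thus "j \<in> {x. nabla x \<notin> v}" using h(1,2) vp by auto
    qed
    show "\<And>c :: 'a. c \<in> {x. nabla x \<notin> v} \<Longrightarrow> \<not> a \<le> c"
    proof -
      fix c :: 'a assume h: "c \<in> {x. nabla x \<notin> v}"
      show "\<not> a \<le> c"
      proof
        assume "a \<le> c"
        hence "nabla a \<le> nabla c" by (rule temp_mono[OF t])
        thus False using h filt_up[OF vf v(2)] by auto
      qed
    qed
  qed simp
  then obtain G where G: "filt G" "a \<in> G" "G \<inter> {x. nabla x \<notin> v} = {}"
     "\<forall>x y j. is_join x y j \<longrightarrow> j \<in> G \<longrightarrow> x \<in> G \<or> y \<in> G" by blast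
  have "\<forall>z. is_least z \<longrightarrow> z \<notin> G"
  proof (intro allI impI)
    fix z :: 'a assume "is_least z"
    hence "nabla z = z" "z \<notin> v" using temp_least[OF t] vl by auto
    thus "z \<notin> G" using G(3) by auto
  qed
  thus "\<exists>u\<in>primes. a \<in> u \<and> (\<forall>x\<in>u. nabla x \<in> v)" using G unfolding primes_def by blast
next
  fix nabla and Fw :: "'a set" assume t: "temporal imp nabla" and w: "alg_sat wF imp nabla" and F: "Fw \<in> primes"
  obtain z where z: "is_least z" "\<forall>a. nabla a = z \<longrightarrow> a = z" using w by auto
  have "nabla (imp top z) \<le> z" using temp_T1[OF t] by blast
  moreover have "z \<le> nabla (imp top z)" using z(1) unfolding is_least_def by blast
  ultimately have "nabla (imp top z) = z" by (rule order.antisym)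
  hence "imp top z = z" using z(2) by blast
  hence "imp top z \<notin> Fw" using F z(1) unfolding primes_def by auto
  thus "\<exists>G\<in>primes. base imp Fw G" using W3[OF F] by blast
next
  fix f :: "'a \<Rightarrow> 'a" and G :: "'a set"
  assume f: "mono f" "f top = top" "\<forall>x y. f (inf x y) = inf (f x) (f y)"
    "\<forall>x y j. is_join x y j \<longrightarrow> is_join (f x) (f y) (f j)" "\<forall>z. is_least z \<longrightarrow> f z = z" and G: "G \<in> primes"
  have "filt (f -` G)" using filt_vimage[OF f(1-3)] G unfolding primes_def by blast
  moreover have "\<forall>z. is_least z \<longrightarrow> z \<notin> f -` G" using f(5) G unfolding primes_def by auto
  moreover have "\<forall>x y j. is_join x y j \<longrightarrow> j \<in> f -` G \<longrightarrow> x \<in> f -` G \<or> y \<in> f -` G"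
  proof (intro allI impI)
    fix x y j :: 'a assume h: "is_join x y j" "j \<in> f -` G"
    hence "is_join (f x) (f y) (f j)" "f j \<in> G" using f(4) by auto
    moreover have "\<forall>x y j. is_join x y j \<longrightarrow> j \<in> G \<longrightarrow> x \<in> G \<or> y \<in> G" using G unfolding primes_def by blast
    ultimately have "f x \<in> G \<or> f y \<in> G" by blast
    thus "x \<in> f -` G \<or> y \<in> f -` G" by simp
  qed
  ultimately show "f -` G \<in> primes" unfolding primes_def by blast
qed
qed


lemma primes_pj:
  "preserves_finite_joins (i_of (primes :: 'a::bounded_semilattice_inf_top set set))"
  unfolding preserves_finite_joins_def
proof (intro conjI allI impI)
  fix z :: 'a assume "is_least z"
  thus "i_of primes z = {}" unfolding i_of_def primes_def by blast
next
  fix a b j :: 'a assume j: "is_join a b j"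
  show "i_of primes j = i_of primes a \<union> i_of primes b"
  proof
    show "i_of primes j \<subseteq> i_of primes a \<union> i_of primes b"
    proof
      fix G assume "G \<in> i_of primes j"
      hence "G \<in> primes" "j \<in> G" unfolding i_of_def by auto
      moreover have "\<forall>x y j. is_join x y j \<longrightarrow> j \<in> G \<longrightarrow> x \<in> G \<or> y \<in> G"
        using \<open>G \<in> primes\<close> unfolding primes_def by blast
      ultimately show "G \<in> i_of primes a \<union> i_of primes b" using j unfolding i_of_def by blast
    qed
  next
    have "a \<le> j" "b \<le> j" using j unfolding is_join_def by auto
    thus "i_of primes a \<union> i_of primes b \<subseteq> i_of primes j"
      unfolding i_of_def primes_def using filt_up by blast
  qed
qed

theorem theorem8p7:
  fixes imp :: "'a::bounded_semilattice_inf_top \<Rightarrow> 'a \<Rightarrow> 'a"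
  assumes "strong_algebra imp" and "internalizes_meets imp"
  shows "\<exists>(W :: 'a set set) leW R (i :: 'a \<Rightarrow> 'a set set).
           kripke_frame W leW R \<and> embedding_props imp W leW R i \<and>
           ((has_finite_joins TYPE('a) \<and> distributive TYPE('a) \<and> internalizes_joins imp)
              \<longrightarrow> preserves_finite_joins i) \<and>
           (\<forall>nabla. temporal imp nabla \<longrightarrow>
              (\<forall>a. i (nabla a) = knabla W R (i a)) \<and>
              (\<forall>Rs :: cond set. (\<forall>\<rho>\<in>Rs. alg_sat \<rho> imp nabla) \<longrightarrow> (\<forall>\<rho>\<in>Rs. frame_sat \<rho> W leW R)))"
proof (cases "has_finite_joins TYPE('a) \<and> distributive TYPE('a) \<and> internalizes_joins imp")
  case True
  hence g: "gen imp primes" using gen_primes[OF assms] by blast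
  show ?thesis
    apply (rule exI[of _ primes], rule exI[of _ "leW_of imp primes"], rule exI[of _ "R_of imp primes"],
        rule exI[of _ "i_of primes"])
    using gen.generic[OF g] primes_pj by blast
next
  case False
  have g: "gen imp {G. filt G}" using gen_all[OF assms] .
  show ?thesis
    apply (rule exI[of _ "{G. filt G}"], rule exI[of _ "leW_of imp {G. filt G}"], rule exI[of _ "R_of imp {G. filt G}"],
        rule exI[of _ "i_of {G. filt G}"])
    using gen.generic[OF g] False by blast
qed

end
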